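(* There exist a financial system $S$ with payment priorities and a bank $v$ such that: $S$ has exactly two solutions $r_1\neq r_2$, with $q_v(r_1)>0$ and $q_v(r_2)=0$; and for some system $S'$ obtained from $S$ by changing the priorities of (some of) the contracts whose debtor is $v$ (everything else unchanged), $S'$ has exactly one solution $r'$, which satisfies $r'=r_1$ and $q'_v(r')=q_v(r_1)$, where $q'_v$ is the payoff of $v$ in $S'$.
   Context: A financial system with payment priorities consists of: a finite set $V$ of banks; external assets $e_v\ge 0$ for each $v\in V$; a number $P\ge 1$ of priority levels; and a finite set of contracts, each of which is either a debt contract from a debtor $u$ to a creditor $v\neq u$ with weight $c>0$, or a credit default swap (CDS) from a debtor $u$ to a creditor $v\neq u$ in reference to a bank $w\notin\{u,v\}$ (the reference entity) with weight $c>0$. Every contract has a priority in $\{1,\dots,P\}$ (1 is the highest priority). It is assumed that every bank that is the reference entity of some CDS is the debtor of at least one debt contract of positive weight. Given a recovery rate vector $r\in[0,1]^V$: the liability of a contract $k$ is $l_k(r)=c$ if $k$ is a debt of weight $c$, and $l_k(r)=c\,(1-r_w)$ if $k$ is a CDS of weight $c$ in reference to $w$. For a bank $v$, $l_v(r)$ is the sum of the liabilities of the contracts with debtor $v$; $l_v^{(\rho)}(r)$ is the sum of the liabilities of contracts with debtor $v$ and priority $\rho$; and $l_v^{(\le\rho)}(r)=\sum_{i=1}^{\rho}l_v^{(i)}(r)$ (with $l_v^{(\le 0)}=0$). The payment on a contract $k$ with debtor $v$ and priority $\rho$ is $p_k(r)=l_k(r)\cdot\min\{1,\max\{0,(r_v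 l_v(r)-l_v^{(\le\rho-1)}(r))/l_v^{(\rho)}(r)\}\}$ (and $p_k(r)=0$ if $l_v^{(\rho)}(r)=0$). The assets of $v$ are $a_v(r)=e_v+\sum_k p_k(r)$, summing over contracts $k$ with creditor $v$. A vector $r\in[0,1]^V$ is a solution (clearing vector) if for every $v\in V$: $r_v=1$ when $a_v(r)\ge l_v(r)$, and $r_v=a_v(r)/l_v(r)$ when $a_v(r)<l_v(r)$. The payoff of $v$ is $q_v(r)=\max\{a_v(r)-l_v(r),0\}$. When $P=1$, payments reduce to $p_k(r)=r_v\,l_k(r)$ (principle of proportionality); this is called the base model. *)

theory Defs
  imports Main "HOL.Real"
begin

datatype contract =
    Debt (debtor: nat) (creditor: nat) (weight: real) (prio: nat)
  | CDS (debtor: nat) (creditor: nat) (refent: nat) (weight: real) (prio: nat)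

record fsys =
  banks :: "nat set"
  ext :: "nat \<Rightarrow> real"
  levels :: nat
  contracts :: "contract list"

definition wf_contract :: "fsys \<Rightarrow> contract \<Rightarrow> bool" where
  "wf_contract S k = (case k of
      Debt u v c p \<Rightarrow> u \<in> banks S \<and> v \<in> banks S \<and> u \<noteq> v \<and> c > 0 \<and> 1 \<le> p \<and> p \<le> levels S
    | CDS u v w c p \<Rightarrow> u \<in> banks S \<and> v \<in> banks S \<and> w \<in> banks S \<and> u \<noteq> v \<and> w \<noteq> u \<and> w \<noteq> v
        \<and> c > 0 \<and> 1 \<le> p \<and> p \<le> levels S
        \<and> (\<exists>k'\<in>set (contracts S). (\<exists>x c' p'. k' = Debt w x c' p' \<and> c' > 0)))"

definition wf_sys :: "fsys \<Rightarrow> bool" where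
  "wf_sys S = (finite (banks S) \<and> (\<forall>v\<in>banks S. ext S v \<ge> 0) \<and> levels S \<ge> 1
     \<and> (\<forall>k\<in>set (contracts S). wf_contract S k))"

definition liab_c :: "(nat \<Rightarrow> real) \<Rightarrow> contract \<Rightarrow> real" where
  "liab_c r k = (case k of Debt u v c p \<Rightarrow> c | CDS u v w c p \<Rightarrow> c * (1 - r w))"

definition liab :: "fsys \<Rightarrow> (nat \<Rightarrow> real) \<Rightarrow> nat \<Rightarrow> real" where
  "liab S r u = sum_list (map (liab_c r) (filter (\<lambda>k. debtor k = u) (contracts S)))"

definition liab_p :: "fsys \<Rightarrow> (nat \<Rightarrow> real) \<Rightarrow> nat \<Rightarrow> nat \<Rightarrow> real" where
  "liab_p S r u \<rho> = sum_list (map (liab_c r)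
      (filter (\<lambda>k. debtor k = u \<and> prio k = \<rho>) (contracts S)))"

definition liab_le :: "fsys \<Rightarrow> (nat \<Rightarrow> real) \<Rightarrow> nat \<Rightarrow> nat \<Rightarrow> real" where
  "liab_le S r u \<rho> = (\<Sum>i=1..\<rho>. liab_p S r u i)"

definition pay :: "fsys \<Rightarrow> (nat \<Rightarrow> real) \<Rightarrow> contract \<Rightarrow> real" where
  "pay S r k = (let u = debtor k; \<rho> = prio k; L = liab_p S r u \<rho> in
     if L = 0 then 0
     else liab_c r k * min 1 (max 0 ((r u * liab S r u - liab_le S r u (\<rho> - 1)) / L)))"

definition assets :: "fsys \<Rightarrow> (nat \<Rightarrow> real) \<Rightarrow> nat \<Rightarrow> real" where
  "assets S r v = ext S v + sum_list (map (pay S r) (filter (\<lambda>k. creditor k = v) (contracts S)))"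

definition solution :: "fsys \<Rightarrow> (nat \<Rightarrow> real) \<Rightarrow> bool" where
  "solution S r = (\<forall>v\<in>banks S. 0 \<le> r v \<and> r v \<le> 1 \<and>
      (assets S r v \<ge> liab S r v \<longrightarrow> r v = 1) \<and>
      (assets S r v < liab S r v \<longrightarrow> r v = assets S r v / liab S r v))"

definition payoff :: "fsys \<Rightarrow> (nat \<Rightarrow> real) \<Rightarrow> nat \<Rightarrow> real" where
  "payoff S r v = max (assets S r v - liab S r v) 0"

definition agree_on :: "fsys \<Rightarrow> (nat \<Rightarrow> real) \<Rightarrow> (nat \<Rightarrow> real) \<Rightarrow> bool" where
  "agree_on S r r' = (\<forall>u\<in>banks S. r u = r' u)"

definition set_prio :: "nat \<Rightarrow> contract \<Rightarrow> contract" where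
  "set_prio q k = (case k of Debt u v c p \<Rightarrow> Debt u v c q | CDS u v w c p \<Rightarrow> CDS u v w c q)"

definition prio_change :: "fsys \<Rightarrow> fsys \<Rightarrow> nat \<Rightarrow> bool" where
  "prio_change S S' v = (banks S' = banks S \<and> ext S' = ext S \<and> levels S' = levels S \<and>
     list_all2 (\<lambda>k k'. k' = set_prio (prio k') k \<and> (prio k' \<noteq> prio k \<longrightarrow> debtor k = v))
       (contracts S) (contracts S'))"

end

theory Submission
  imports Defs
begin
definition S0 :: fsys where "S0 = (| banks = {0,1,2,3}, ext = (\<lambda>i. if i = 0 then 4/3 else 0), levels = 2,
  contracts = [Debt 0 1 1 1, CDS 0 3 1 3 1, Debt 1 2 1 1] |)"
definition S1 :: fsys where "S1 = (| banks = {0,1,2,3}, ext = (\<lambda>i. if i = 0 then 4/3 else 0), levels = 2,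
  contracts = [Debt 0 1 1 1, CDS 0 3 1 3 2, Debt 1 2 1 1] |)"
lemma L0: "liab S0 r 0 = 4 - 3 * r 1" "liab S0 r 1 = 1" "liab S0 r 2 = 0" "liab S0 r 3 = 0"
  "liab S1 r 0 = 4 - 3 * r 1" "liab S1 r 1 = 1" "liab S1 r 2 = 0" "liab S1 r 3 = 0"
  by (simp_all add: S0_def S1_def liab_def liab_c_def)
lemma A0: "r 1 \<le> 1 \<Longrightarrow> assets S0 r 1 = min 1 (max 0 (r 0))"
  "assets S0 r 0 = 4/3" "assets S1 r 0 = 4/3"
  "assets S1 r 1 = min 1 (max 0 (r 0 * (4 - 3 * r 1)))"
  by (simp_all add: S0_def S1_def assets_def pay_def liab_def liab_c_def liab_p_def liab_le_def)
lemma L0s: "liab S0 r (Suc 0) = 1" "liab S1 r (Suc 0) = 1"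
  by (simp_all add: S0_def S1_def liab_def liab_c_def)
lemma A0s: "r 1 \<le> 1 \<Longrightarrow> assets S0 r (Suc 0) = min 1 (max 0 (r 0))"
  "assets S1 r (Suc 0) = min 1 (max 0 (r 0 * (4 - 3 * r 1)))"
  using A0 by simp_all
lemma A23: "r 1 \<le> 1 \<Longrightarrow> assets S0 r 2 \<ge> 0" "r 1 \<le> 1 \<Longrightarrow> assets S0 r 3 \<ge> 0"
  "r 1 \<le> 1 \<Longrightarrow> assets S1 r 2 \<ge> 0" "r 1 \<le> 1 \<Longrightarrow> assets S1 r 3 \<ge> 0"
  by (auto simp add: S0_def S1_def assets_def pay_def liab_def liab_c_def liab_p_def liab_le_def Let_def)

lemma sol_iff: "solution S r \<longleftrightarrow> (\<forall>v\<in>banks S. 0 \<le> r v \<and> r v \<le> 1 \<and>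
      (assets S r v \<ge> liab S r v \<longrightarrow> r v = 1) \<and>
      (assets S r v < liab S r v \<longrightarrow> r v = assets S r v / liab S r v))"
  by (simp add: solution_def)

lemma bS0: "banks S0 = {0,1,2,3}" and bS1: "banks S1 = {0,1,2,3}" by (simp_all add: S0_def S1_def)

lemma uniq0:
  assumes "solution S0 r"
  shows "agree_on S0 r (\<lambda>_. 1) \<or> agree_on S0 r (\<lambda>i. if i \<le> 1 then 2/3 else 1)"
proof -
  have s: "\<forall>v\<in>{0,1,2,3}. 0 \<le> r v \<and> r v \<le> 1 \<and>
      (assets S0 r v \<ge> liab S0 r v \<longrightarrow> r v = 1) \<and>
      (assets S0 r v < liab S0 r v \<longrightarrow> r v = assets S0 r v / liab S0 r v)"
    using assms by (simp add: solution_def bS0)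
  have r1: "0 \<le> r 1" "r 1 \<le> 1" "0 \<le> r 0" "r 0 \<le> 1" using s by auto
  have r2: "r 2 = 1" using s A23(1)[of r, OF r1(2)] by (auto simp: L0)
  have r3: "r 3 = 1" using s A23(2)[of r, OF r1(2)] by (auto simp: L0)
  have s1: "(assets S0 r 1 \<ge> liab S0 r 1 \<longrightarrow> r 1 = 1) \<and> (assets S0 r 1 < liab S0 r 1 \<longrightarrow> r 1 = assets S0 r 1 / liab S0 r 1)"
    using s by blast
  have s0: "(assets S0 r 0 \<ge> liab S0 r 0 \<longrightarrow> r 0 = 1) \<and> (assets S0 r 0 < liab S0 r 0 \<longrightarrow> r 0 = assets S0 r 0 / liab S0 r 0)"
    using s by blast
  have b1: "r 1 = r 0" using s1 r1 unfolding L0(2) A0(1)[of r, OF r1(2)] by (auto simp: min_def max_def)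
  have b0: "4/3 \<ge> 4 - 3 * r 1 \<longrightarrow> r 0 = 1" "4/3 < 4 - 3 * r 1 \<longrightarrow> r 0 = (4/3) / (4 - 3 * r 1)"
    using s0 unfolding L0(1) A0(2) by auto
  show ?thesis
  proof (cases "r 0 = 1")
    case True
    then show ?thesis using b1 r2 r3 by (auto simp: agree_on_def bS0)
  next
    case False
    then have lt: "4/3 < 4 - 3 * r 1" and eq: "r 0 = (4/3) / (4 - 3 * r 1)" using b0 by auto
    then have "r 0 * (4 - 3 * r 0) = 4/3" using b1 by (simp add: field_simps)
    then have "3 * (r 0 - 2/3)^2 = 0" by (simp add: power2_eq_square algebra_simps)
    then have "r 0 = 2/3" by simp
    then show ?thesis using b1 r2 r3 by (auto simp: agree_on_def bS0)
  qed
qed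

lemma uniq1:
  assumes "solution S1 r"
  shows "agree_on S1 r (\<lambda>_. 1)"
proof -
  have s: "\<forall>v\<in>{0,1,2,3}. 0 \<le> r v \<and> r v \<le> 1 \<and>
      (assets S1 r v \<ge> liab S1 r v \<longrightarrow> r v = 1) \<and>
      (assets S1 r v < liab S1 r v \<longrightarrow> r v = assets S1 r v / liab S1 r v)"
    using assms by (simp add: solution_def bS1)
  have r1: "0 \<le> r 1" "r 1 \<le> 1" "0 \<le> r 0" "r 0 \<le> 1" using s by auto
  have r2: "r 2 = 1" using s A23(3)[of r, OF r1(2)] by (auto simp: L0)
  have r3: "r 3 = 1" using s A23(4)[of r, OF r1(2)] by (auto simp: L0)
  have s1: "(assets S1 r 1 \<ge> liab S1 r 1 \<longrightarrow> r 1 = 1) \<and> (assets S1 r 1 < liab S1 r 1 \<longrightarrow> r 1 = assets S1 r 1 / liab S1 r 1)"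
    using s by blast
  have s0: "(assets S1 r 0 \<ge> liab S1 r 0 \<longrightarrow> r 0 = 1) \<and> (assets S1 r 0 < liab S1 r 0 \<longrightarrow> r 0 = assets S1 r 0 / liab S1 r 0)"
    using s by blast
  have b0: "4/3 \<ge> 4 - 3 * r 1 \<longrightarrow> r 0 = 1" "4/3 < 4 - 3 * r 1 \<longrightarrow> r 0 = (4/3) / (4 - 3 * r 1)"
    using s0 unfolding L0(5) A0(3) by auto
  have "r 0 * (4 - 3 * r 1) \<ge> 1"
  proof (cases "4/3 \<ge> 4 - 3 * r 1")
    case True then show ?thesis using b0 r1 by auto
  next
    case False then show ?thesis using b0 by (auto simp: field_simps)
  qed
  then have "assets S1 r 1 = 1" unfolding A0(4) by (simp add: min_def max_def)
  then have "r 1 = 1" using s1 unfolding L0(6) by auto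
  then have "r 0 = 1" using b0 by auto
  then show ?thesis using \<open>r 1 = 1\<close> r2 r3 by (auto simp: agree_on_def bS1)
qed

theorem mainTheorem9:
  shows "\<exists>S v r1 r2. wf_sys S \<and> v \<in> banks S \<and>
     solution S r1 \<and> solution S r2 \<and> \<not> agree_on S r1 r2 \<and>
     (\<forall>r. solution S r \<longrightarrow> agree_on S r r1 \<or> agree_on S r r2) \<and>
     payoff S r1 v > 0 \<and> payoff S r2 v = 0 \<and>
     (\<exists>S' r'. wf_sys S' \<and> prio_change S S' v \<and> solution S' r' \<and>
        (\<forall>r. solution S' r \<longrightarrow> agree_on S' r r') \<and>
        agree_on S r' r1 \<and> payoff S' r' v = payoff S r1 v)"
proof -
  let ?r1 = "(\<lambda>_. 1) :: nat \<Rightarrow> real"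
  let ?r2 = "(\<lambda>i. if i \<le> 1 then 2/3 else 1) :: nat \<Rightarrow> real"
  have wf0: "wf_sys S0" by (simp add: wf_sys_def wf_contract_def S0_def)
  have wf1: "wf_sys S1" by (simp add: wf_sys_def wf_contract_def S1_def)
  have s01: "solution S0 ?r1"
    using A23(1,2)[of ?r1] by (auto simp: solution_def bS0 L0 A0 L0s A0s)
  have s02: "solution S0 ?r2"
    using A23(1,2)[of ?r2] by (auto simp: solution_def bS0 L0 A0 L0s A0s)
  have s11: "solution S1 ?r1"
    using A23(3,4)[of ?r1] by (auto simp: solution_def bS1 L0 A0 L0s A0s)
  have na: "\<not> agree_on S0 ?r1 ?r2" by (auto simp: agree_on_def bS0)
  have p1: "payoff S0 ?r1 0 = 1/3" by (simp add: payoff_def L0 A0 L0s A0s)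
  have p2: "payoff S0 ?r2 0 = 0" by (simp add: payoff_def L0 A0 L0s A0s)
  have p1': "payoff S1 ?r1 0 = 1/3" by (simp add: payoff_def L0 A0 L0s A0s)
  have pc: "prio_change S0 S1 0"
    by (simp add: prio_change_def S0_def S1_def set_prio_def)
  have E: "\<exists>S' r'. wf_sys S' \<and> prio_change S0 S' 0 \<and> solution S' r' \<and>
        (\<forall>r. solution S' r \<longrightarrow> agree_on S' r r') \<and>
        agree_on S0 r' ?r1 \<and> payoff S' r' 0 = payoff S0 ?r1 0"
    apply (rule exI[of _ S1], rule exI[of _ ?r1])
    using wf1 pc s11 uniq1 p1 p1' by (simp add: agree_on_def)
  have U: "\<forall>r. solution S0 r \<longrightarrow> agree_on S0 r ?r1 \<or> agree_on S0 r ?r2" using uniq0 by blast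
  have v0: "(0::nat) \<in> banks S0" by (simp add: bS0)
  have pp: "payoff S0 ?r1 0 > 0" using p1 by simp
  show ?thesis
    apply (rule exI[of _ S0], rule exI[of _ 0], rule exI[of _ ?r1], rule exI[of _ ?r2])
    using wf0 v0 s01 s02 na U pp p2 E by blast
qed
end
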